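(* If $\lambda\equiv 2\pmod 4$, $v=\frac{2nk}{\lambda}+t\equiv 2\pmod 4$ and $t$ is odd, then a ${}^\lambda\mathrm{H}_t(m,n;s,k)$ does not exist.
   Context: Let $m,n,s,k,\lambda,t$ be positive integers with $t$ dividing $\frac{2nk}{\lambda}$, let $v=\frac{2nk}{\lambda}+t$ and let $J$ be the subgroup of $\mathbb{Z}_v$ of order $t$. A $\lambda$-fold Heffter array ${}^\lambda\mathrm{H}_t(m,n;s,k)$ is an $m\times n$ partially filled array with entries in $\mathbb{Z}_v$ such that: (a) each row has exactly $s$ and each column exactly $k$ filled cells; (b) the multiset $\{\pm x: x$ an entry of a filled cell$\}$ (counted over all filled cells) contains each element of $\mathbb{Z}_v\setminus J$ exactly $\lambda$ times and no element of $J$; (c) every row and every column sums to $0$ in $\mathbb{Z}_v$. *)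

theory Defs
  imports Main
begin

text \<open>Elements of Z_v are represented by their canonical integer representatives in
  {0..<v}. A partially filled m x n array is a function A :: nat => nat => int option,
  where A i j = None means the cell (i,j) is empty (rows/columns indexed from 0).\<close>

definition hv :: "nat \<Rightarrow> nat \<Rightarrow> nat \<Rightarrow> nat \<Rightarrow> int" where
  "hv lam t n k = int (2 * n * k div lam + t)"

text \<open>The subgroup J of Z_v of order t (t divides v): the multiples of v div t.\<close>
definition hJ :: "int \<Rightarrow> nat \<Rightarrow> int set" where
  "hJ v t = {y. 0 \<le> y \<and> y < v \<and> (v div int t) dvd y}"

definition filled_cells :: "nat \<Rightarrow> nat \<Rightarrow> (nat \<Rightarrow> nat \<Rightarrow> int option) \<Rightarrow> (nat \<times> nat) set" where
  "filled_cells m n A = {(i, j). i < m \<and> j < n \<and> A i j \<noteq> None}"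

definition heffter_array ::
  "nat \<Rightarrow> nat \<Rightarrow> nat \<Rightarrow> nat \<Rightarrow> nat \<Rightarrow> nat \<Rightarrow> (nat \<Rightarrow> nat \<Rightarrow> int option) \<Rightarrow> bool" where
  "heffter_array lam t m n s k A \<longleftrightarrow>
    (let v = hv lam t n k; C = filled_cells m n A in
      (\<forall>i j. A i j \<noteq> None \<longrightarrow> i < m \<and> j < n) \<and>
      (\<forall>i j x. A i j = Some x \<longrightarrow> 0 \<le> x \<and> x < v) \<and>
      (\<forall>i<m. card {j. j < n \<and> A i j \<noteq> None} = s) \<and>
      (\<forall>j<n. card {i. i < m \<and> A i j \<noteq> None} = k) \<and>
      (\<forall>y. 0 \<le> y \<and> y < v \<longrightarrow>
         card {c \<in> C. the (A (fst c) (snd c)) mod v = y}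
         + card {c \<in> C. (- the (A (fst c) (snd c))) mod v = y}
         = (if y \<in> hJ v t then 0 else lam)) \<and>
      (\<forall>i<m. (\<Sum>j\<in>{j. j < n \<and> A i j \<noteq> None}. the (A i j)) mod v = 0) \<and>
      (\<forall>j<n. (\<Sum>i\<in>{i. i < m \<and> A i j \<noteq> None}. the (A i j)) mod v = 0))"

end

theory Submission
  imports Defs
begin

lemma card_fibers:
  fixes g :: "'a \<Rightarrow> int"
  assumes "finite C" "finite Od"
  shows "(\<Sum>y\<in>Od. card {c\<in>C. g c = y}) = card {c\<in>C. g c \<in> Od}"
proof -
  have "{c\<in>C. g c \<in> Od} = (\<Union>y\<in>Od. {c\<in>C. g c = y})" by auto
  moreover have "card (\<Union>y\<in>Od. {c\<in>C. g c = y}) = (\<Sum>y\<in>Od. card {c\<in>C. g c = y})"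
    by (rule card_UN_disjoint) (use assms in auto)
  ultimately show ?thesis by simp
qed

lemma card_odd_int:
  fixes w :: int
  assumes "0 \<le> w"
  shows "card {y::int. 0 \<le> y \<and> y < 2*w \<and> odd y} = nat w"
proof -
  have "{y::int. 0 \<le> y \<and> y < 2*w \<and> odd y} = (\<lambda>z. 2*z+1) ` {0..<w}"
  proof (rule set_eqI, rule iffI)
    fix y assume "y \<in> {y::int. 0 \<le> y \<and> y < 2*w \<and> odd y}"
    then obtain z where "y = 2*z+1" "0 \<le> y" "y < 2*w" by (auto elim: oddE)
    then show "y \<in> (\<lambda>z. 2*z+1) ` {0..<w}" by force
  qed auto
  moreover have "inj_on (\<lambda>z::int. 2*z+1) {0..<w}" by (auto simp: inj_on_def)
  ultimately show ?thesis by (simp add: card_image)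
qed

theorem proposition4p2:
  fixes lam t m n s k :: nat
  assumes "0 < m" "0 < n" "0 < s" "0 < k" "0 < lam" "0 < t"
    and "lam dvd 2 * n * k" and "t dvd 2 * n * k div lam"
    and "lam mod 4 = 2"
    and "(2 * n * k div lam + t) mod 4 = 2"
    and "odd t"
  shows "\<not> (\<exists>A. heffter_array lam t m n s k A)"
proof
  assume "\<exists>A. heffter_array lam t m n s k A"
  then obtain A where H: "heffter_array lam t m n s k A" by blast
  define v where "v = hv lam t n k"
  define C where "C = filled_cells m n A"
  define x where "x = (\<lambda>c. the (A (fst c) (snd c)))"
  note H' = H[unfolded heffter_array_def Let_def, folded v_def C_def]
  have rng: "\<And>i j y. A i j = Some y \<Longrightarrow> 0 \<le> y \<and> y < v" using H' by blast
  have cnt: "\<And>y. 0 \<le> y \<and> y < v \<Longrightarrow> card {c \<in> C. x c mod v = y}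
         + card {c \<in> C. (- x c) mod v = y} = (if y \<in> hJ v t then 0 else lam)"
    using H' unfolding x_def by blast
  have rows: "\<forall>i<m. (\<Sum>j\<in>{j. j < n \<and> A i j \<noteq> None}. the (A i j)) mod v = 0"
    using H' by blast
  have v4: "v mod 4 = 2" unfolding v_def hv_def using assms(10)
    by (metis of_nat_mod of_nat_numeral)
  have vnn: "v \<ge> 0" unfolding v_def hv_def by simp
  have vpos: "v > 0" using v4 vnn by presburger
  have Cfin: "finite C"
    by (rule finite_subset[of _ "{..<m} \<times> {..<n}"]) (auto simp: C_def filled_cells_def)
  have xr: "\<And>c. c \<in> C \<Longrightarrow> 0 \<le> x c \<and> x c < v"
    using rng unfolding C_def filled_cells_def x_def by auto
  define Od where "Od = {y::int. 0 \<le> y \<and> y < v \<and> odd y}"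
  have Odfin: "finite Od" unfolding Od_def by (rule finite_subset[of _ "{0..<v}"]) auto
  have ev: "even v" using v4 by presburger
  have tdv: "int t dvd v" unfolding v_def hv_def using assms(8)
    by (metis dvd_add_left_iff dvd_refl int_dvd_int_iff of_nat_add)
  then obtain q where vq: "v = int t * q" by (auto elim: dvdE)
  have qev: "even q" using ev vq assms(11) by auto
  have vdt: "v div int t = q" using vq assms(6) by simp
  have Jev: "\<And>y. y \<in> hJ v t \<Longrightarrow> even y"
    unfolding hJ_def vdt using qev by (auto elim: dvdE)
  have sumL: "(\<Sum>y\<in>Od. card {c \<in> C. x c mod v = y} + card {c \<in> C. (- x c) mod v = y})
      = lam * card Od"
  proof -
    have "(\<Sum>y\<in>Od. card {c \<in> C. x c mod v = y} + card {c \<in> C. (- x c) mod v = y})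
        = (\<Sum>y\<in>Od. lam)"
    proof (rule sum.cong)
      fix y assume "y \<in> Od"
      then have "0 \<le> y \<and> y < v" "y \<notin> hJ v t" using Jev unfolding Od_def by auto
      then show "card {c \<in> C. x c mod v = y} + card {c \<in> C. (- x c) mod v = y} = lam"
        using cnt by simp
    qed simp
    then show ?thesis by simp
  qed
  have s1: "(\<Sum>y\<in>Od. card {c \<in> C. x c mod v = y}) = card {c\<in>C. odd (x c)}"
  proof -
    have "(\<Sum>y\<in>Od. card {c \<in> C. x c mod v = y}) = card {c\<in>C. x c mod v \<in> Od}"
      by (rule card_fibers[OF Cfin Odfin])
    also have "{c\<in>C. x c mod v \<in> Od} = {c\<in>C. odd (x c)}"
      using xr by (auto simp: Od_def)
    finally show ?thesis .
  qed
  have s2: "(\<Sum>y\<in>Od. card {c \<in> C. (- x c) mod v = y}) = card {c\<in>C. odd (x c)}"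
  proof -
    have "(\<Sum>y\<in>Od. card {c \<in> C. (- x c) mod v = y}) = card {c\<in>C. (- x c) mod v \<in> Od}"
      by (rule card_fibers[OF Cfin Odfin])
    also have "{c\<in>C. (- x c) mod v \<in> Od} = {c\<in>C. odd (x c)}"
    proof -
      have "\<And>c. odd ((- x c) mod v) \<longleftrightarrow> odd (x c)"
      proof -
        fix c
        have "(- x c) mod v = (- x c) - v * ((- x c) div v)"
          by (simp add: minus_div_mult_eq_mod[symmetric] mult.commute)
        then show "odd ((- x c) mod v) \<longleftrightarrow> odd (x c)" using ev by simp
      qed
      then show ?thesis using vpos by (auto simp: Od_def)
    qed
    finally show ?thesis .
  qed
  have cO: "card Od = nat (v div 2)"
  proof -
    have "Od = {y::int. 0 \<le> y \<and> y < 2*(v div 2) \<and> odd y}" using ev unfolding Od_def by auto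
    then show ?thesis using card_odd_int[of "v div 2"] vpos by simp
  qed
  have key: "2 * card {c\<in>C. odd (x c)} = lam * nat (v div 2)"
    using sumL s1 s2 cO by (simp add: sum.distrib)
  have "odd (v div 2)" using v4 by presburger
  then have oddv2: "odd (nat (v div 2))" using vpos by (simp add: even_nat_iff)
  have ll: "lam = 2 * (lam div 2)" "odd (lam div 2)" using assms(9) by presburger+
  have oddcard: "odd (card {c\<in>C. odd (x c)})" proof -
    have "2 * card {c\<in>C. odd (x c)} = 2 * ((lam div 2) * nat (v div 2))"
      using key ll(1) by (metis mult.assoc)
    then have "card {c\<in>C. odd (x c)} = (lam div 2) * nat (v div 2)" by simp
    then show ?thesis using ll(2) oddv2 by simp
  qed
  have Csig: "C = Sigma {..<m} (\<lambda>i. {j. j < n \<and> A i j \<noteq> None})"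
    by (auto simp: C_def filled_cells_def)
  have "sum x C = (\<Sum>i<m. \<Sum>j\<in>{j. j < n \<and> A i j \<noteq> None}. the (A i j))"
    unfolding Csig x_def by (subst sum.Sigma) (auto simp: case_prod_beta)
  moreover have "\<And>i. i < m \<Longrightarrow> even (\<Sum>j\<in>{j. j < n \<and> A i j \<noteq> None}. the (A i j))"
  proof -
    fix i assume "i < m"
    then have "v dvd (\<Sum>j\<in>{j. j < n \<and> A i j \<noteq> None}. the (A i j))" using rows by auto
    then show "even (\<Sum>j\<in>{j. j < n \<and> A i j \<noteq> None}. the (A i j))"
      using ev dvd_trans by blast
  qed
  ultimately have "even (sum x C)" by (metis (no_types, lifting) dvd_sum lessThan_iff)
  then show False using oddcard even_sum_iff[OF Cfin, of x] by simp
qed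

end
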